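(* Let $p,a$ be positive integers with $\gcd(a,p)=1$, let $r\ge0$, $m\ge1$ and $1\le v\le p$ be integers. Let $b_{v,r,a,m}(n)$ denote the number of partitions of $n$ in which every multiplicity is congruent to $ja\pmod p$ for some $j\in\{0,1,\ldots,v-1\}$ and, for such $j$, lies between $j(pr+a)$ and $j(pr+a)+p(m-1)$ inclusive (equivalently, every multiplicity has the form $j(pr+a)+pk$ with $0\le j\le v-1$, $0\le k\le m-1$). Set $b_{v,r,a,m}(0)=1$ and $b_{v,r,a,m}(n)=0$ for $n<0$. If $\gcd(v,p)\nmid n$, then $$b_{v,r,a,m}(n)=\sum_{j=1}^{n}(-1)^{j+1}\Big(b_{v,r,a,m}\big(n-\tfrac{(pr+a)j(3j-1)}{2}\big)+b_{v,r,a,m}\big(n-\tfrac{(pr+a)j(3j+1)}{2}\big)\Big).$$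
   Context: Multiplicity of a part means the number of times it appears in the partition. *)

theory Defs
  imports Main "HOL-Library.Multiset"
begin

definition partitions :: "nat \<Rightarrow> nat multiset set" where
  "partitions n = {M. (\<forall>x\<in>#M. x > 0) \<and> sum_mset M = n}"

definition allowed_mult :: "nat \<Rightarrow> nat \<Rightarrow> nat \<Rightarrow> nat \<Rightarrow> nat \<Rightarrow> nat set" where
  "allowed_mult p v r a m = {j * (p * r + a) + p * k | j k. j < v \<and> k < m}"

definition b :: "nat \<Rightarrow> nat \<Rightarrow> nat \<Rightarrow> nat \<Rightarrow> nat \<Rightarrow> int \<Rightarrow> int" where
  "b p v r a m n = (if n < 0 then 0 else
     int (card {M \<in> partitions (nat n). \<forall>x\<in>#M. count M x \<in> allowed_mult p v r a m}))"

end

theory Submission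
  imports Defs "HOL-Computational_Algebra.Formal_Power_Series"
begin
unbundle fps_syntax

definition tt :: "'a::comm_ring_1 \<Rightarrow> nat \<Rightarrow> nat \<Rightarrow> 'a" where
  "tt y n k = (-1)^k * (\<Prod>i\<in>{k<..n}. (1 - y^i)) * y^(n*k + k*(k+1) div 2)"

definition pentS :: "'a::comm_ring_1 \<Rightarrow> nat \<Rightarrow> 'a" where
  "pentS y n = (\<Sum>j\<le>n. (-1)^j * y^(j*(3*j+1) div 2)) + (\<Sum>j\<in>{1..n}. (-1)^j * y^(j*(3*j-1) div 2))"

lemma tt_Suc1:
  assumes "k \<le> n"
  shows "tt y (Suc n) k = tt y n k * y^k * (1 - y^(Suc n))"
proof -
  have "{k<..Suc n} = insert (Suc n) {k<..n}" using assms by auto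
  hence P: "(\<Prod>i\<in>{k<..Suc n}. (1 - y^i)) = (1 - y^(Suc n)) * (\<Prod>i\<in>{k<..n}. (1 - y^i))"
    by simp
  have E: "Suc n * k + k*(k+1) div 2 = (n*k + k*(k+1) div 2) + k" by simp
  show ?thesis unfolding tt_def P E power_add by (simp add: algebra_simps)
qed

lemma tt_Suc2:
  assumes "k < n"
  shows "tt y n (Suc k) * (1 - y^(Suc k)) = - (tt y n k * y^(n + k + 1))"
proof -
  have "{k<..n} = insert (Suc k) {Suc k<..n}" using assms by auto
  hence P: "(\<Prod>i\<in>{k<..n}. (1 - y^i)) = (1 - y^(Suc k)) * (\<Prod>i\<in>{Suc k<..n}. (1 - y^i))"
    by simp
  have E: "n * Suc k + Suc k*(Suc k+1) div 2 = (n*k + k*(k+1) div 2) + (n + k + 1)"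
  proof -
    have "Suc k*(Suc k+1) = k*(k+1) + 2*(k+1)" by (simp add: algebra_simps)
    hence "Suc k*(Suc k+1) div 2 = k*(k+1) div 2 + (k+1)" by simp
    thus ?thesis by (simp add: algebra_simps)
  qed
  show ?thesis unfolding tt_def P E power_add by (simp add: algebra_simps)
qed

lemma tt_diag: "tt y n n = (-1)^n * y^(n*(3*n+1) div 2)"
proof -
  have "n*n + n*(n+1) div 2 = n*(3*n+1) div 2"
  proof -
    have "n*(3*n+1) = n*(n+1) + 2*(n*n)" by (simp add: algebra_simps)
    thus ?thesis by simp
  qed
  thus ?thesis unfolding tt_def by simp
qed

lemma shanks: "(\<Sum>k\<le>n. tt y n k) = pentS y n"
proof (induction n)
  case 0
  then show ?case by (simp add: tt_def pentS_def)
next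
  case (Suc n)
  define s where "s = (\<Sum>k\<le>n. tt y n k)"
  have A: "(\<Sum>k\<le>Suc n. tt y (Suc n) k) = (\<Sum>k\<le>n. tt y n k * y^k * (1 - y^(Suc n))) + tt y (Suc n) (Suc n)"
    by (simp add: tt_Suc1)
  have B: "(\<Sum>k\<le>n. tt y n k * y^k * (1 - y^(Suc n))) = s - (\<Sum>k\<le>n. tt y n k * (1 - y^k)) - (\<Sum>k\<le>n. tt y n k * y^(n+k+1))"
    unfolding s_def sum_subtractf[symmetric] by (rule sum.cong) (auto simp: algebra_simps power_add)
  have C: "(\<Sum>k\<le>n. tt y n k * (1 - y^k)) = (\<Sum>k<n. tt y n (Suc k) * (1 - y^(Suc k)))"
    by (subst sum.atMost_shift) simp
  also have "\<dots> = - (\<Sum>k<n. tt y n k * y^(n + k + 1))"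
    unfolding sum_negf[symmetric] by (rule sum.cong) (simp_all add: tt_Suc2 del: power_Suc)
  finally have C': "(\<Sum>k\<le>n. tt y n k * (1 - y^k)) = - (\<Sum>k<n. tt y n k * y^(n + k + 1))" .
  have D: "(\<Sum>k\<le>n. tt y n k * y^(n+k+1)) = (\<Sum>k<n. tt y n k * y^(n + k + 1)) + tt y n n * y^(n+n+1)"
    by (simp add: lessThan_Suc_atMost[symmetric])
  have E1: "tt y n n * y^(n+n+1) = (-1)^n * y^(Suc n*(3*Suc n - 1) div 2)"
  proof -
    have "n*(3*n+1) div 2 + (n+n+1) = Suc n*(3*Suc n - 1) div 2"
    proof -
      have "Suc n*(3*Suc n - 1) = n*(3*n+1) + 2*(n+n+1)" by (simp add: algebra_simps)
      thus ?thesis by simp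
    qed
    hence "y^(n*(3*n+1) div 2) * y^(n+n+1) = y^(Suc n*(3*Suc n - 1) div 2)"
      by (simp only: power_add[symmetric])
    thus ?thesis by (simp only: tt_diag mult.assoc)
  qed
  have F: "pentS y (Suc n) = pentS y n + (-1)^(Suc n) * y^(Suc n*(3*Suc n+1) div 2) + (-1)^(Suc n) * y^(Suc n*(3*Suc n - 1) div 2)"
  proof -
    have "{1..Suc n} = insert (Suc n) {1..n}" by auto
    hence "(\<Sum>j\<in>{1..Suc n}. (-1)^j * y^(j*(3*j-1) div 2)) = (-1)^(Suc n) * y^(Suc n*(3*Suc n - 1) div 2) + (\<Sum>j\<in>{1..n}. (-1)^j * y^(j*(3*j-1) div 2))"
      by (simp only: sum.insert finite_atLeastAtMost) (simp add: atLeastAtMost_iff)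
    moreover have "(\<Sum>j\<le>Suc n. (-1)^j * y^(j*(3*j+1) div 2)) = (\<Sum>j\<le>n. (-1)^j * y^(j*(3*j+1) div 2)) + (-1)^(Suc n) * y^(Suc n*(3*Suc n+1) div 2)"
      by (simp only: sum.atMost_Suc)
    ultimately show ?thesis unfolding pentS_def by (simp only: algebra_simps)
  qed
  have E2: "tt y (Suc n) (Suc n) = (-1)^Suc n * y^(Suc n*(3*Suc n+1) div 2)" by (rule tt_diag)
  have G: "(\<Sum>k\<le>Suc n. tt y (Suc n) k) = s - tt y n n * y^(n+n+1) + tt y (Suc n) (Suc n)"
    unfolding A B C' D by (simp add: algebra_simps)
  have IH: "s = pentS y n" using Suc.IH s_def by simp
  show ?case unfolding G E1 E2 F IH by (simp add: algebra_simps)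
qed


definition QQ :: "nat set \<Rightarrow> nat \<Rightarrow> nat \<Rightarrow> nat multiset set" where
  "QQ S K n = {M. set_mset M \<subseteq> {1..K} \<and> sum_mset M = n \<and> (\<forall>x\<in>#M. count M x \<in> S)}"

lemma QQ_0: "QQ S 0 n = (if n = 0 then {{#}} else {})"
  by (auto simp: QQ_def)

lemma QQ_Suc:
  fixes e :: "'d \<Rightarrow> nat"
  assumes S: "S = e ` D" and inj: "inj_on e D" and z: "0 \<in> S"
  shows "QQ S (Suc K) n = (\<Union>d\<in>{d\<in>D. Suc K * e d \<le> n}.
      (\<lambda>M. M + replicate_mset (e d) (Suc K)) ` QQ S K (n - Suc K * e d))"
proof (rule set_eqI, rule iffI)
  fix M assume M: "M \<in> QQ S (Suc K) n"
  define c where "c = count M (Suc K)"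
  define M' where "M' = {#x \<in># M. x \<noteq> Suc K#}"
  have cS: "c \<in> S"
  proof (cases "c = 0")
    case True thus ?thesis using z by simp
  next
    case False
    hence "Suc K \<in># M" unfolding c_def by (simp add: count_eq_zero_iff)
    thus ?thesis using M unfolding QQ_def c_def by auto
  qed
  then obtain d where d: "d \<in> D" "c = e d" using S by auto
  have "M = {#x \<in># M. x \<noteq> Suc K#} + {#x \<in># M. \<not> x \<noteq> Suc K#}"
    by (rule multiset_partition)
  hence Meq: "M = M' + replicate_mset c (Suc K)"
    unfolding M'_def c_def filter_eq_replicate_mset[symmetric] by simp
  have sumM: "sum_mset M = n" using M by (simp add: QQ_def)
  have "sum_mset M = sum_mset M' + c * Suc K" by (subst Meq) simp
  hence sm: "sum_mset M' + c * Suc K = n" using sumM by simp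
  have "M' \<in> QQ S K (n - Suc K * e d)"
  proof -
    have "set_mset M' \<subseteq> {1..K}" using M unfolding QQ_def M'_def by auto
    moreover have "sum_mset M' = n - Suc K * e d" using sm d by (simp add: algebra_simps)
    moreover have "\<forall>x\<in>#M'. count M' x \<in> S" using M unfolding QQ_def M'_def by auto
    ultimately show ?thesis unfolding QQ_def by simp
  qed
  moreover have "Suc K * e d \<le> n" using sm d by (simp add: algebra_simps)
  ultimately show "M \<in> (\<Union>d\<in>{d\<in>D. Suc K * e d \<le> n}.
      (\<lambda>M. M + replicate_mset (e d) (Suc K)) ` QQ S K (n - Suc K * e d))"
    using d Meq by (intro UN_I[of d]) auto
next
  fix M assume "M \<in> (\<Union>d\<in>{d\<in>D. Suc K * e d \<le> n}.
      (\<lambda>M. M + replicate_mset (e d) (Suc K)) ` QQ S K (n - Suc K * e d))"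
  then obtain d M' where d: "d \<in> D" "Suc K * e d \<le> n" and M': "M' \<in> QQ S K (n - Suc K * e d)"
    and Meq: "M = M' + replicate_mset (e d) (Suc K)" by blast
  have nin: "Suc K \<notin># M'" using M' unfolding QQ_def by auto
  have "set_mset M \<subseteq> {1..Suc K}" using M' Meq unfolding QQ_def by auto
  moreover have "sum_mset M = n" using M' Meq d unfolding QQ_def by (simp add: algebra_simps)
  moreover have "\<forall>x\<in>#M. count M x \<in> S"
  proof
    fix x assume x: "x \<in># M"
    show "count M x \<in> S"
    proof (cases "x = Suc K")
      case True
      hence "count M x = e d" using nin Meq by (simp add: count_eq_zero_iff)
      thus ?thesis using S d by auto
    next
      case False
      hence "x \<in># M'" "count M x = count M' x" using x Meq by (auto split: if_splits)
      thus ?thesis using M' unfolding QQ_def by auto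
    qed
  qed
  ultimately show "M \<in> QQ S (Suc K) n" unfolding QQ_def by simp
qed

lemma QQ_card:
  fixes e :: "'d \<Rightarrow> nat"
  assumes S: "S = e ` D" and inj: "inj_on e D" and z: "0 \<in> S" and fin: "finite D"
  shows "finite (QQ S K n) \<and> int (card (QQ S K n)) =
     (\<Prod>x\<in>{1..K}. (\<Sum>d\<in>D. fps_X^(x * e d) :: int fps)) $ n"
proof (induction K arbitrary: n)
  case 0
  then show ?case by (simp add: QQ_0)
next
  case (Suc K)
  let ?D' = "{d\<in>D. Suc K * e d \<le> n}"
  let ?g = "\<lambda>d M. M + replicate_mset (e d) (Suc K)"
  have eq: "QQ S (Suc K) n = (\<Union>d\<in>?D'. ?g d ` QQ S K (n - Suc K * e d))"
    by (rule QQ_Suc[OF S inj z])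
  have finD': "finite ?D'" using fin by simp
  have fin1: "\<forall>d\<in>?D'. finite (?g d ` QQ S K (n - Suc K * e d))" using Suc.IH by simp
  have disj: "\<forall>d1\<in>?D'. \<forall>d2\<in>?D'. d1 \<noteq> d2 \<longrightarrow>
      ?g d1 ` QQ S K (n - Suc K * e d1) \<inter> ?g d2 ` QQ S K (n - Suc K * e d2) = {}"
  proof (intro ballI impI)
    fix d1 d2 assume d: "d1 \<in> ?D'" "d2 \<in> ?D'" "d1 \<noteq> d2"
    hence ne: "e d1 \<noteq> e d2" using inj by (auto dest: inj_onD)
    show "?g d1 ` QQ S K (n - Suc K * e d1) \<inter> ?g d2 ` QQ S K (n - Suc K * e d2) = {}"
    proof (rule ccontr)
      assume "?g d1 ` QQ S K (n - Suc K * e d1) \<inter> ?g d2 ` QQ S K (n - Suc K * e d2) \<noteq> {}"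
      then obtain M1 M2 where M: "M1 \<in> QQ S K (n - Suc K * e d1)" "M2 \<in> QQ S K (n - Suc K * e d2)"
        "?g d1 M1 = ?g d2 M2" by blast
      have "Suc K \<notin># M1" "Suc K \<notin># M2" using M(1,2) unfolding QQ_def by auto
      hence "count (?g d1 M1) (Suc K) = e d1" "count (?g d2 M2) (Suc K) = e d2"
        by (simp_all add: count_eq_zero_iff)
      thus False using M(3) ne by simp
    qed
  qed
  have "card (QQ S (Suc K) n) = (\<Sum>d\<in>?D'. card (?g d ` QQ S K (n - Suc K * e d)))"
    unfolding eq by (rule card_UN_disjoint[OF finD' fin1 disj])
  also have "\<dots> = (\<Sum>d\<in>?D'. card (QQ S K (n - Suc K * e d)))"
    by (rule sum.cong) (auto intro!: card_image inj_onI)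
  finally have c1: "int (card (QQ S (Suc K) n)) = (\<Sum>d\<in>D. if Suc K * e d \<le> n then int (card (QQ S K (n - Suc K * e d))) else 0)"
    by (simp only: sum.inter_filter[OF fin] of_nat_sum of_nat_0 if_distrib[of int])
  define P where "P = (\<Prod>x\<in>{1..K}. (\<Sum>d\<in>D. fps_X^(x * e d) :: int fps))"
  have "(\<Prod>x\<in>{1..Suc K}. (\<Sum>d\<in>D. fps_X^(x * e d) :: int fps)) =
      (\<Sum>d\<in>D. fps_X^(Suc K * e d)) * P"
    unfolding P_def by (simp add: atLeastAtMostSuc_conv del: mult_Suc)
  also have "\<dots> = (\<Sum>d\<in>D. fps_X^(Suc K * e d) * P)"
    by (simp only: sum_distrib_right)
  finally have "(\<Prod>x\<in>{1..Suc K}. (\<Sum>d\<in>D. fps_X^(x * e d) :: int fps)) $ n =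
     (\<Sum>d\<in>D. (fps_X^(Suc K * e d) * P) $ n)" by (simp only: fps_sum_nth)
  also have "\<dots> = (\<Sum>d\<in>D. if Suc K * e d \<le> n then P $ (n - Suc K * e d) else 0)"
    by (rule sum.cong) (simp_all only: fps_X_power_mult_nth not_less if_not_P if_P, auto)
  finally have c2: "(\<Prod>x\<in>{1..Suc K}. (\<Sum>d\<in>D. fps_X^(x * e d) :: int fps)) $ n =
     (\<Sum>d\<in>D. if Suc K * e d \<le> n then P $ (n - Suc K * e d) else 0)" .
  have fin2: "finite (QQ S (Suc K) n)" unfolding eq using finD' fin1 by blast
  show ?case unfolding c1 c2 using fin2 Suc.IH unfolding P_def by (auto intro!: sum.cong)
qed


definition gsup :: "nat \<Rightarrow> int fps \<Rightarrow> bool" where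
  "gsup g f = (\<forall>i. \<not> g dvd i \<longrightarrow> f $ i = 0)"

lemma gsup_one: "gsup g 1"
  unfolding gsup_def by auto

lemma gsup_X: "g dvd k \<Longrightarrow> gsup g (fps_X ^ k)"
  unfolding gsup_def by auto

lemma gsup_diff: "gsup g f \<Longrightarrow> gsup g h \<Longrightarrow> gsup g (f - h)"
  unfolding gsup_def by auto

lemma gsup_add: "gsup g f \<Longrightarrow> gsup g h \<Longrightarrow> gsup g (f + h)"
  unfolding gsup_def by auto

lemma gsup_mult: assumes "gsup g f" "gsup g h" shows "gsup g (f * h)"
  unfolding gsup_def
proof (intro allI impI)
  fix n assume n: "\<not> g dvd n"
  have "\<forall>i\<in>{0..n}. f $ i * h $ (n - i) = 0"
  proof
    fix i assume i: "i \<in> {0..n}"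
    show "f $ i * h $ (n - i) = 0"
    proof (cases "g dvd i")
      case True
      have "\<not> g dvd (n - i)"
      proof
        assume "g dvd (n - i)"
        hence "g dvd (i + (n - i))" using True by simp
        thus False using n i by simp
      qed
      thus ?thesis using assms(2) unfolding gsup_def by simp
    next
      case False thus ?thesis using assms(1) unfolding gsup_def by simp
    qed
  qed
  thus "(f * h) $ n = 0" unfolding fps_mult_nth by (rule sum.neutral)
qed

lemma gsup_sum: "finite A \<Longrightarrow> (\<And>x. x \<in> A \<Longrightarrow> gsup g (f x)) \<Longrightarrow> gsup g (\<Sum>x\<in>A. f x)"
  by (induction A rule: finite_induct) (auto simp: gsup_def)

lemma gsup_prod: "finite A \<Longrightarrow> (\<And>x. x \<in> A \<Longrightarrow> gsup g (f x)) \<Longrightarrow> gsup g (\<Prod>x\<in>A. f x)"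
  by (induction A rule: finite_induct) (auto intro: gsup_one gsup_mult)

lemma factor_id:
  fixes N p v m x :: nat
  shows "(\<Sum>d\<in>{..<v}\<times>{..<m}. fps_X^(x * (fst d * N + p * snd d)) :: int fps) * (1 - fps_X^(x*N))
     = (1 - (fps_X^(x*N))^v) * (\<Sum>k<m. fps_X^(x*p*k))"
proof -
  have "(\<Sum>d\<in>{..<v}\<times>{..<m}. fps_X^(x * (fst d * N + p * snd d)) :: int fps)
      = (\<Sum>j<v. \<Sum>k<m. (fps_X^(x*N))^j * fps_X^(x*p*k))"
    unfolding sum.cartesian_product
    by (rule sum.cong) (auto simp: power_add power_mult[symmetric] algebra_simps)
  also have "\<dots> = (\<Sum>j<v. (fps_X^(x*N))^j) * (\<Sum>k<m. fps_X^(x*p*k))"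
    by (simp add: sum_product)
  finally have L: "(\<Sum>d\<in>{..<v}\<times>{..<m}. fps_X^(x * (fst d * N + p * snd d)) :: int fps)
      = (\<Sum>j<v. (fps_X^(x*N))^j) * (\<Sum>k<m. fps_X^(x*p*k))" .
  have geo: "1 - (fps_X^(x*N) :: int fps)^v = (1 - fps_X^(x*N)) * (\<Sum>j<v. (fps_X^(x*N))^j)"
    by (rule one_diff_power_eq)
  show ?thesis unfolding L geo by (simp only: mult_ac)
qed

lemma neg1_pow_mult_nth: "((-1 :: int fps)^j * f) $ d = (-1)^j * f $ d"
  by (cases "even j") auto

lemma coeff_E:
  fixes N K d :: nat
  assumes "N > 0" "d \<le> K"
  shows "(\<Prod>i\<in>{0<..K}. (1 - (fps_X^N)^i) :: int fps) $ d =
     (\<Sum>j\<le>K. (-1)^j * (if d = N * (j*(3*j+1) div 2) then 1 else 0)) +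
     (\<Sum>j\<in>{1..K}. (-1)^j * (if d = N * (j*(3*j-1) div 2) then 1 else 0))"
proof -
  let ?Y = "fps_X^N :: int fps"
  have tt0: "tt ?Y K 0 = (\<Prod>i\<in>{0<..K}. (1 - ?Y^i))" unfolding tt_def by simp
  have "{..K} = insert 0 {1..K}" by auto
  hence "(\<Sum>k\<le>K. tt ?Y K k) = tt ?Y K 0 + (\<Sum>k\<in>{1..K}. tt ?Y K k)" by simp
  hence E: "(\<Prod>i\<in>{0<..K}. (1 - ?Y^i)) = pentS ?Y K - (\<Sum>k\<in>{1..K}. tt ?Y K k)"
    using shanks[of ?Y K] tt0 by (simp add: algebra_simps)
  have z: "(tt ?Y K k) $ d = 0" if k: "k \<in> {1..K}" for k
  proof -
    have "tt ?Y K k = ((-1)^k * (\<Prod>i\<in>{k<..K}. (1 - ?Y^i))) * fps_X^(N * (K*k + k*(k+1) div 2))"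
      unfolding tt_def by (simp add: power_mult)
    moreover have "d < N * (K*k + k*(k+1) div 2)"
    proof -
      have k1: "k \<ge> 1" using k by simp
      have "1*2 \<le> k*(k+1)" by (rule mult_le_mono) (use k1 in auto)
      hence "2 div 2 \<le> k*(k+1) div 2" by (intro div_le_mono) simp
      moreover have "K*1 \<le> K*k" by (rule mult_le_mono2) (use k1 in auto)
      ultimately have "K*k + k*(k+1) div 2 > K" by linarith
      have "N * (K*k + k*(k+1) div 2) \<ge> (K*k + k*(k+1) div 2)" 
        using assms(1) by simp
      thus ?thesis using assms(2) \<open>K*k + k*(k+1) div 2 > K\<close> by linarith
    qed
    ultimately show ?thesis by (simp add: fps_X_power_mult_right_nth)
  qed
  have "(\<Prod>i\<in>{0<..K}. (1 - ?Y^i)) $ d = pentS ?Y K $ d"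
    unfolding E using z by (simp add: fps_sum_nth)
  also have "\<dots> = (\<Sum>j\<le>K. (-1)^j * (if d = N * (j*(3*j+1) div 2) then 1 else 0)) +
     (\<Sum>j\<in>{1..K}. (-1)^j * (if d = N * (j*(3*j-1) div 2) then 1 else 0))"
    unfolding pentS_def by (simp add: fps_sum_nth neg1_pow_mult_nth power_mult[symmetric])
  finally show ?thesis .
qed


lemma swap_delta:
  fixes s :: "nat \<Rightarrow> int" and B :: "nat \<Rightarrow> int"
  assumes "finite J"
  shows "(\<Sum>d=0..K. (\<Sum>j\<in>J. s j * (if d = c j then 1 else 0)) * B d) =
         (\<Sum>j\<in>J. s j * (if c j \<le> K then B (c j) else 0))"
proof -
  have "(\<Sum>d=0..K. (\<Sum>j\<in>J. s j * (if d = c j then 1 else 0)) * B d) =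
        (\<Sum>d=0..K. \<Sum>j\<in>J. s j * (if d = c j then B d else 0))"
    by (intro sum.cong refl) (auto simp: sum_distrib_right intro!: sum.cong)
  also have "\<dots> = (\<Sum>j\<in>J. \<Sum>d=0..K. s j * (if d = c j then B d else 0))"
    by (rule sum.swap)
  also have "\<dots> = (\<Sum>j\<in>J. s j * (if c j \<le> K then B (c j) else 0))"
    by (rule sum.cong) (simp_all add: sum_distrib_left[symmetric] sum.delta')
  finally show ?thesis .
qed

lemma b_neg: "t < 0 \<Longrightarrow> b p v r a m t = 0"
  by (simp add: b_def)

lemma b_if: "(if c \<le> K then b p v r a m (int K - int c) else 0) = b p v r a m (int K - int c)"
  by (simp add: b_neg)

lemma inj_e:
  fixes N p v m :: nat
  assumes "p > 0" "coprime (int p) (int N)" "v \<le> p"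
  shows "inj_on (\<lambda>d::nat\<times>nat. fst d * N + p * snd d) ({..<v} \<times> {..<m})"
proof (rule inj_onI)
  fix d1 d2 :: "nat \<times> nat"
  assume d: "d1 \<in> {..<v} \<times> {..<m}" "d2 \<in> {..<v} \<times> {..<m}"
    and eq: "fst d1 * N + p * snd d1 = fst d2 * N + p * snd d2"
  obtain j1 k1 j2 k2 where dd: "d1 = (j1,k1)" "d2 = (j2,k2)" by (cases d1, cases d2)
  have j: "j1 < p" "j2 < p" using d dd assms(3) by auto
  have eqn: "j1 * N + p * k1 = j2 * N + p * k2" using eq dd by simp
  hence "int (j1 * N + p * k1) = int (j2 * N + p * k2)" by (rule arg_cong)
  hence eqn': "int j1 * int N + int p * int k1 = int j2 * int N + int p * int k2"
    by (simp only: of_nat_add of_nat_mult)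
  have eqi: "(int j1 - int j2) * int N = int p * (int k2 - int k1)"
    using eqn' by (simp add: left_diff_distrib right_diff_distrib)
  have "int p dvd (int j1 - int j2) * int N" unfolding eqi by simp
  hence dv: "int p dvd (int j1 - int j2)" using assms(2) coprime_dvd_mult_left_iff by blast
  have "j1 = j2"
  proof (rule ccontr)
    assume "j1 \<noteq> j2"
    hence "int j1 - int j2 \<noteq> 0" by simp
    from dvd_imp_le_int[OF this dv] j show False by linarith
  qed
  moreover have "k1 = k2"
  proof -
    have "int p * (int k2 - int k1) = 0" using eqi \<open>j1 = j2\<close> by simp
    thus ?thesis using assms(1) by simp
  qed
  ultimately show "d1 = d2" using dd by simp
qed

theorem theorem4p1:
  fixes p a r m v :: nat and n :: int
  assumes "p > 0" and "a > 0" and "gcd a p = 1"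
    and "m \<ge> 1" and "1 \<le> v" and "v \<le> p"
    and "\<not> (int (gcd v p) dvd n)"
  shows "b p v r a m n =
    (\<Sum>j = 1..n. (-1) ^ nat (j + 1) *
       (b p v r a m (n - int (p * r + a) * (j * (3 * j - 1) div 2))
      + b p v r a m (n - int (p * r + a) * (j * (3 * j + 1) div 2))))"
proof (cases "n > 0")
  case False
  hence "n < 0" using assms(7) by (cases "n = 0") auto
  thus ?thesis by (simp add: b_neg)
next
  case True
  define N where "N = p*r+a"
  define D where "D = {..<v} \<times> {..<m}"
  define e where "e = (\<lambda>d::nat\<times>nat. fst d * N + p * snd d)"
  define S where "S = allowed_mult p v r a m"
  define g where "g = gcd v p"
  define K where "K = nat n"
  define bb where "bb = b p v r a m"
  have N0: "N > 0" using assms(2) unfolding N_def by simp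
  have SeD: "S = e ` D" unfolding S_def allowed_mult_def e_def D_def N_def by force
  have cop: "coprime (int p) (int N)"
  proof -
    have "gcd p (r * p + a) = gcd p a" by (rule gcd_add_mult)
    hence "gcd p N = 1" using assms(3) unfolding N_def by (simp add: gcd.commute mult.commute)
    hence "coprime p N" by (simp add: coprime_iff_gcd_eq_1)
    thus ?thesis by simp
  qed
  have inj: "inj_on e D" unfolding e_def D_def by (rule inj_e[OF assms(1) cop assms(6)])
  have z: "0 \<in> S" unfolding S_def allowed_mult_def using assms(4,5)
    by (auto intro!: exI[of _ 0])
  have finD: "finite D" unfolding D_def by simp
  have nK: "n = int K" using True unfolding K_def by simp
  have bQ: "bb (int t) = int (card (QQ S K t))" if t: "t \<le> K" for t
  proof -
    have "{M \<in> partitions t. \<forall>x\<in>#M. count M x \<in> allowed_mult p v r a m} = QQ S K t"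
    proof (rule set_eqI, rule iffI)
      fix M assume M: "M \<in> {M \<in> partitions t. \<forall>x\<in>#M. count M x \<in> allowed_mult p v r a m}"
      have xle: "x \<le> t" if x: "x \<in># M" for x
      proof -
        have "sum_mset M = x + sum_mset (M - {#x#})" using x by (simp add: sum_mset.remove)
        thus ?thesis using M unfolding partitions_def by auto
      qed
      have "set_mset M \<subseteq> {1..K}"
      proof
        fix x assume x: "x \<in> set_mset M"
        have "x \<le> t" using xle x by simp
        moreover have "x > 0" using M x unfolding partitions_def by auto
        ultimately show "x \<in> {1..K}" using t by simp
      qed
      thus "M \<in> QQ S K t" using M unfolding partitions_def QQ_def S_def by auto
    next
      fix M assume "M \<in> QQ S K t"
      thus "M \<in> {M \<in> partitions t. \<forall>x\<in>#M. count M x \<in> allowed_mult p v r a m}"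
        unfolding partitions_def QQ_def S_def by auto
    qed
    thus ?thesis unfolding bb_def b_def by simp
  qed
  define A where "A = (\<Prod>x\<in>{1..K}. (\<Sum>d\<in>D. fps_X^(x * e d)) :: int fps)"
  have Acoef: "A $ t = bb (int t)" if "t \<le> K" for t
    using QQ_card[OF SeD inj z finD, of K t] bQ[OF that] unfolding A_def by simp
  define E where "E = (\<Prod>i\<in>{0<..K}. (1 - (fps_X^N)^i) :: int fps)"
  have "{0<..K} = {1..K}" by auto
  hence E': "E = (\<Prod>x\<in>{1..K}. (1 - fps_X^(x*N)) :: int fps)"
    unfolding E_def by (simp add: power_mult[symmetric] mult.commute)
  have AE: "A * E = (\<Prod>x\<in>{1..K}. (1 - (fps_X^(x*N))^v) * (\<Sum>k<m. fps_X^(x*p*k)) :: int fps)"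
    unfolding A_def E' prod.distrib[symmetric] e_def D_def by (rule prod.cong) (simp_all only: factor_id)
  have gs: "gsup g (A * E)" unfolding AE
  proof (intro gsup_prod gsup_mult gsup_diff gsup_one gsup_sum)
    fix x k
    show "gsup g ((fps_X ^ (x * N)) ^ v)" unfolding power_mult[symmetric]
      by (rule gsup_X) (simp add: g_def)
    show "gsup g (fps_X ^ (x * p * k))" by (rule gsup_X) (simp add: g_def)
  qed simp_all
  have ndvd: "\<not> g dvd K" using assms(7) nK unfolding g_def by simp
  have "(E * A) $ K = 0" using gs ndvd unfolding gsup_def by (simp add: mult.commute)
  hence "0 = (\<Sum>d=0..K. E $ d * A $ (K - d))" by (simp add: fps_mult_nth)
  also have "\<dots> = (\<Sum>d=0..K. ((\<Sum>j\<le>K. (-1)^j * (if d = N * (j*(3*j+1) div 2) then 1 else 0)) +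
     (\<Sum>j\<in>{1..K}. (-1)^j * (if d = N * (j*(3*j-1) div 2) then 1 else 0))) * bb (int K - int d))"
    unfolding E_def by (rule sum.cong) (simp_all add: coeff_E[OF N0] Acoef of_nat_diff)
  also have "\<dots> = (\<Sum>j\<le>K. (-1)^j * (if N * (j*(3*j+1) div 2) \<le> K then bb (int K - int (N * (j*(3*j+1) div 2))) else 0))
      + (\<Sum>j\<in>{1..K}. (-1)^j * (if N * (j*(3*j-1) div 2) \<le> K then bb (int K - int (N * (j*(3*j-1) div 2))) else 0))"
    unfolding distrib_right sum.distrib by (simp only: swap_delta finite_atMost finite_atLeastAtMost)
  also have "\<dots> = (\<Sum>j\<le>K. (-1)^j * bb (int K - int (N * (j*(3*j+1) div 2))))
      + (\<Sum>j\<in>{1..K}. (-1)^j * bb (int K - int (N * (j*(3*j-1) div 2))))"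
    unfolding bb_def by (simp only: b_if)
  also have "\<dots> = bb (int K) + (\<Sum>j\<in>{1..K}. (-1)^j * (bb (int K - int (N * (j*(3*j-1) div 2)))
      + bb (int K - int (N * (j*(3*j+1) div 2)))))"
  proof -
    have "{..K} = insert 0 {1..K}" by auto
    hence "(\<Sum>j\<le>K. (-1)^j * bb (int K - int (N * (j*(3*j+1) div 2)))) =
       bb (int K) + (\<Sum>j\<in>{1..K}. (-1)^j * bb (int K - int (N * (j*(3*j+1) div 2))))" by simp
    thus ?thesis by (simp add: sum.distrib algebra_simps)
  qed
  finally have m0: "0 = bb (int K) + (\<Sum>j\<in>{1..K}. (-1)^j * (bb (int K - int (N * (j*(3*j-1) div 2)))
      + bb (int K - int (N * (j*(3*j+1) div 2)))))" .
  have neg: "(\<Sum>j\<in>{1..K}. (-1)^(j+1) * (bb (int K - int (N * (j*(3*j-1) div 2)))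
      + bb (int K - int (N * (j*(3*j+1) div 2))))) = - (\<Sum>j\<in>{1..K}. (-1)^j * (bb (int K - int (N * (j*(3*j-1) div 2)))
      + bb (int K - int (N * (j*(3*j+1) div 2)))))"
    unfolding sum_negf[symmetric] by (rule sum.cong) simp_all
  have main: "bb (int K) = (\<Sum>j\<in>{1..K}. (-1)^(j+1) * (bb (int K - int (N * (j*(3*j-1) div 2)))
      + bb (int K - int (N * (j*(3*j+1) div 2)))))"
    unfolding neg using m0 by linarith
  have "(\<Sum>j = 1..n. (-1) ^ nat (j + 1) *
       (bb (n - int N * (j * (3 * j - 1) div 2)) + bb (n - int N * (j * (3 * j + 1) div 2))))
     = (\<Sum>j\<in>int ` {1..K}. (-1) ^ nat (j + 1) *
       (bb (n - int N * (j * (3 * j - 1) div 2)) + bb (n - int N * (j * (3 * j + 1) div 2))))"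
    by (simp add: image_int_atLeastAtMost nK)
  also have "\<dots> = (\<Sum>j\<in>{1..K}. (-1)^(j+1) * (bb (int K - int (N * (j*(3*j-1) div 2)))
      + bb (int K - int (N * (j*(3*j+1) div 2)))))"
  proof (subst sum.reindex, simp, rule sum.cong, simp)
    fix j assume j: "j \<in> {1..K}"
    have n1: "nat (int j + 1) = j + 1" by simp
    have e1: "int (N * (j*(3*j-1) div 2)) = int N * (int j * (3 * int j - 1) div 2)"
    proof -
      have "1 \<le> 3*j" using j by simp
      hence d3: "int (3*j - 1) = 3 * int j - 1" by (simp add: of_nat_diff)
      show ?thesis by (simp only: zdiv_int of_nat_mult d3 of_nat_numeral)
    qed
    have e2: "int (N * (j*(3*j+1) div 2)) = int N * (int j * (3 * int j + 1) div 2)"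
      by (simp only: zdiv_int of_nat_add of_nat_mult of_nat_numeral of_nat_1)
    show "((\<lambda>j. (-1) ^ nat (j + 1) * (bb (n - int N * (j * (3 * j - 1) div 2)) +
            bb (n - int N * (j * (3 * j + 1) div 2)))) \<circ> int) j =
        (-1)^(j+1) * (bb (int K - int (N * (j*(3*j-1) div 2))) + bb (int K - int (N * (j*(3*j+1) div 2))))"
      unfolding comp_def n1 e1 e2 nK by (rule refl)
  qed
  finally have R: "(\<Sum>j = 1..n. (-1) ^ nat (j + 1) *
       (bb (n - int N * (j * (3 * j - 1) div 2)) + bb (n - int N * (j * (3 * j + 1) div 2))))
     = (\<Sum>j\<in>{1..K}. (-1)^(j+1) * (bb (int K - int (N * (j*(3*j-1) div 2)))
      + bb (int K - int (N * (j*(3*j+1) div 2)))))" .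
  have "bb n = (\<Sum>j = 1..n. (-1) ^ nat (j + 1) *
       (bb (n - int N * (j * (3 * j - 1) div 2)) + bb (n - int N * (j * (3 * j + 1) div 2))))"
  proof -
    have "bb n = bb (int K)" using nK by simp
    also have "\<dots> = (\<Sum>j\<in>{1..K}. (-1)^(j+1) * (bb (int K - int (N * (j*(3*j-1) div 2)))
      + bb (int K - int (N * (j*(3*j+1) div 2)))))" by (rule main)
    also have "\<dots> = (\<Sum>j = 1..n. (-1) ^ nat (j + 1) *
       (bb (n - int N * (j * (3 * j - 1) div 2)) + bb (n - int N * (j * (3 * j + 1) div 2))))"
      by (rule R[symmetric])
    finally show ?thesis .
  qed
  thus ?thesis by (simp only: bb_def N_def)
qed

end
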